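(* Let $G$ be a finite abelian group of even order $n$, let $S\subseteq G$ with $S=-S$ and $0\notin S$, and let $\Gamma=\mathrm{Cay}(G,S)$. Let $\alpha,\beta$ be nonzero complex numbers, let $x\neq y$ be vertices and $t\in\mathbb{R}$. Then $\Gamma$ has $(\alpha,\beta)$-fractional revival from $x$ to $y$ at time $t$ if and only if all of the following hold: (1) $a=x-y$ has order two in $G$; (2) $\Gamma$ is an integral graph; (3) $e^{\imath t\lambda_g}=\alpha+\beta$ for every $g\in G_0$ and $e^{\imath t\lambda_g}=\alpha-\beta$ for every $g\in G_1$, where $G_0=\{g\in G:\chi_a(g)=1\}$ and $G_1=\{g\in G:\chi_a(g)=-1\}$.
   Context: $\mathrm{Cay}(G,S)$ has vertex set $G$, with $u,v$ adjacent iff $u-v\in S$; $A$ is its adjacency matrix and $H(t)=\exp(\imath tA)$. For distinct vertices $x,y$, the graph has $(\alpha,\beta)$-fractional revival from $x$ to $y$ at time $t$ if $H(t)\mathbf{e}_x=\alpha\mathbf{e}_x+\beta\mathbf{e}_y$ with $\beta\neq0$ and $|\alpha|^2+|\beta|^2=1$. Write $G=\mathbb{Z}_{n_1}\oplus\cdots\oplus\mathbb{Z}_{n_r}$; for $x=(x_1,\dots,x_r)\in G$ the character $\chi_x$ is $\chi_x(g)=\prod_{s=1}^r e^{2\pi\imath x_sg_s/n_s}$ (so $\chi_x(g)=\chi_g(x)$). The eigenvalues of $A$ are $\lambda_g=\sum_{s\in S}\chi_g(s)$, $g\in G$. The graph is integral if all $\lambda_g$ are integers. *)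

theory Defs
  imports "HOL-Analysis.Analysis"
begin

text \<open>The group G = Z_{n_1} + ... + Z_{n_r} is given by the list of moduli ns = [n_1,...,n_r];
  its elements are integer lists x of length r with 0 <= x_s < n_s.\<close>

definition grp :: "nat list \<Rightarrow> int list set" where
  "grp ns = {x. length x = length ns \<and> (\<forall>i<length ns. 0 \<le> x ! i \<and> x ! i < int (ns ! i))}"

definition gzero :: "nat list \<Rightarrow> int list" where
  "gzero ns = replicate (length ns) 0"

definition gadd :: "nat list \<Rightarrow> int list \<Rightarrow> int list \<Rightarrow> int list" where
  "gadd ns x y = map (\<lambda>i. (x ! i + y ! i) mod int (ns ! i)) [0..<length ns]"

definition gneg :: "nat list \<Rightarrow> int list \<Rightarrow> int list" where
  "gneg ns x = map (\<lambda>i. (- (x ! i)) mod int (ns ! i)) [0..<length ns]"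

definition gsub :: "nat list \<Rightarrow> int list \<Rightarrow> int list \<Rightarrow> int list" where
  "gsub ns x y = map (\<lambda>i. (x ! i - y ! i) mod int (ns ! i)) [0..<length ns]"

definition chi :: "nat list \<Rightarrow> int list \<Rightarrow> int list \<Rightarrow> complex" where
  "chi ns x g = (\<Prod>s<length ns. exp (2 * of_real pi * \<i> * of_int (x ! s) * of_int (g ! s) / of_nat (ns ! s)))"

definition eigval :: "nat list \<Rightarrow> int list set \<Rightarrow> int list \<Rightarrow> complex" where
  "eigval ns S g = (\<Sum>s\<in>S. chi ns g s)"

definition integral_cayley :: "nat list \<Rightarrow> int list set \<Rightarrow> bool" where
  "integral_cayley ns S \<longleftrightarrow> (\<forall>g\<in>grp ns. eigval ns S g \<in> \<int>)"

definition adj :: "nat list \<Rightarrow> int list set \<Rightarrow> int list \<Rightarrow> int list \<Rightarrow> complex" where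
  "adj ns S u v = (if gsub ns u v \<in> S then 1 else 0)"

fun adjpow :: "nat list \<Rightarrow> int list set \<Rightarrow> nat \<Rightarrow> int list \<Rightarrow> int list \<Rightarrow> complex" where
  "adjpow ns S 0 u v = (if u = v then 1 else 0)"
| "adjpow ns S (Suc k) u v = (\<Sum>w\<in>grp ns. adj ns S u w * adjpow ns S k w v)"

definition transH :: "nat list \<Rightarrow> int list set \<Rightarrow> real \<Rightarrow> int list \<Rightarrow> int list \<Rightarrow> complex" where
  "transH ns S t u v = (\<Sum>k. (\<i> * of_real t) ^ k / of_nat (fact k) * adjpow ns S k u v)"

definition frac_revival :: "nat list \<Rightarrow> int list set \<Rightarrow> complex \<Rightarrow> complex \<Rightarrow> int list \<Rightarrow> int list \<Rightarrow> real \<Rightarrow> bool" where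
  "frac_revival ns S \<alpha> \<beta> x y t \<longleftrightarrow>
     (\<forall>u\<in>grp ns. transH ns S t u x = (if u = x then \<alpha> else 0) + (if u = y then \<beta> else 0))
     \<and> \<beta> \<noteq> 0 \<and> (cmod \<alpha>)\<^sup>2 + (cmod \<beta>)\<^sup>2 = 1"

definition has_order_two :: "nat list \<Rightarrow> int list \<Rightarrow> bool" where
  "has_order_two ns a \<longleftrightarrow> a \<noteq> gzero ns \<and> gadd ns a a = gzero ns"

end

theory Submission imports Defs "Jordan_Normal_Form.Char_Poly" begin


definition ee :: "nat \<Rightarrow> int \<Rightarrow> complex" where
  "ee m k = exp (2 * of_real pi * \<i> * of_int k / of_nat m)"

lemma ee_add: "ee m (a + b) = ee m a * ee m b"
  unfolding ee_def by (simp add: exp_add[symmetric] ring_distribs add_divide_distrib)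

lemma ee_0[simp]: "ee m 0 = 1"
  unfolding ee_def by simp

lemma ee_mult_m: assumes "m \<ge> 1" shows "ee m (int m * k) = 1"
proof -
  have "2 * of_real pi * \<i> * of_int (int m * k) / of_nat m = (2 * of_real pi * of_int k) * \<i>"
    using assms by (simp add: field_simps)
  hence "ee m (int m * k) = exp (complex_of_real (real_of_int (2 * k) * pi) * \<i>)"
    unfolding ee_def by (simp add: mult_ac)
  also have "\<dots> = 1" by (subst exp_eq_1) simp
  finally show ?thesis .
qed

lemma ee_mod: assumes "m \<ge> 1" shows "ee m (a mod int m) = ee m a"
proof -
  have "a = a mod int m + int m * (a div int m)" by simp
  hence "ee m a = ee m (a mod int m) * ee m (int m * (a div int m))"
    by (metis ee_add)
  thus ?thesis using ee_mult_m[OF assms] by simp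
qed

lemma ee_cong: assumes "m \<ge> 1" "a mod int m = b mod int m" shows "ee m a = ee m b"
  by (metis assms ee_mod)

lemma ee_alt: "ee m a = exp (\<i> * complex_of_real (2 * pi * a / m))"
  unfolding ee_def by (simp add: mult_ac)

lemma ee_cnj: "cnj (ee m a) = ee m (- a)"
proof -
  have "cnj (ee m a) = exp (cnj (\<i> * complex_of_real (2 * pi * real_of_int a / real m)))"
    by (simp only: ee_alt exp_cnj)
  also have "cnj (\<i> * complex_of_real (2 * pi * real_of_int a / real m))
     = \<i> * complex_of_real (2 * pi * real_of_int (- a) / real m)" by simp
  finally show ?thesis by (simp only: ee_alt)
qed

lemma norm_ee[simp]: "cmod (ee m a) = 1"
  unfolding ee_alt by (rule norm_exp_i_times)

lemma ee_times_cnj[simp]: "ee m a * cnj (ee m a) = 1"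
  by (metis complex_norm_square norm_ee of_real_1 one_power2)

lemma ee_ne1: assumes "0 < a" "a < int m" shows "ee m a \<noteq> 1"
proof
  assume "ee m a = 1"
  hence "exp (\<i> * complex_of_real (2 * pi * a / m)) = 1" by (simp add: ee_alt)
  then obtain k where k: "2 * pi * a / m = real_of_int (2 * k) * pi"
    by (auto simp: exp_eq_1)
  have "m > 0" using assms by simp
  hence "real_of_int a = real m * k" using k by (simp add: field_simps)
  hence "a = int m * k" by (metis of_int_eq_iff of_int_mult of_int_of_nat_eq)
  show False
  proof (cases "k \<le> 0")
    case True
    hence "int m * k \<le> 0" by (simp add: mult_nonneg_nonpos)
    thus False using \<open>a = int m * k\<close> assms by simp
  next
    case False
    hence "int m * k \<ge> int m * 1" by (intro mult_left_mono) auto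
    thus False using \<open>a = int m * k\<close> assms by linarith
  qed
qed



context
  fixes ns :: "nat list"
  assumes pos: "\<forall>i<length ns. ns ! i \<ge> 1"
begin

lemma pos': "i < length ns \<Longrightarrow> int (ns ! i) > 0"
  using pos by fastforce

lemma grp_iff: "x \<in> grp ns \<longleftrightarrow> length x = length ns \<and> (\<forall>i<length ns. 0 \<le> x ! i \<and> x ! i < int (ns ! i))"
  by (simp add: grp_def)

lemma grp_mod: "x \<in> grp ns \<Longrightarrow> i < length ns \<Longrightarrow> x ! i mod int (ns ! i) = x ! i"
  by (simp add: grp_iff)

lemma grp_eqI: "x \<in> grp ns \<Longrightarrow> y \<in> grp ns \<Longrightarrow> (\<And>i. i < length ns \<Longrightarrow> x ! i mod int (ns ! i) = y ! i mod int (ns ! i)) \<Longrightarrow> x = y"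
  by (metis grp_iff grp_mod nth_equalityI)

lemma gadd_nth[simp]: "i < length ns \<Longrightarrow> gadd ns x y ! i = (x ! i + y ! i) mod int (ns ! i)"
  by (simp add: gadd_def)
lemma gsub_nth[simp]: "i < length ns \<Longrightarrow> gsub ns x y ! i = (x ! i - y ! i) mod int (ns ! i)"
  by (simp add: gsub_def)
lemma gneg_nth[simp]: "i < length ns \<Longrightarrow> gneg ns x ! i = (- (x ! i)) mod int (ns ! i)"
  by (simp add: gneg_def)
lemma gzero_nth[simp]: "i < length ns \<Longrightarrow> gzero ns ! i = 0"
  by (simp add: gzero_def)

lemma gadd_grp[simp]: "gadd ns x y \<in> grp ns"
  using pos' by (simp add: grp_iff gadd_def)
lemma gsub_grp[simp]: "gsub ns x y \<in> grp ns"
  using pos' by (simp add: grp_iff gsub_def)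
lemma gneg_grp[simp]: "gneg ns x \<in> grp ns"
  using pos' by (simp add: grp_iff gneg_def)
lemma gzero_grp[simp]: "gzero ns \<in> grp ns"
  using pos' by (simp add: grp_iff gzero_def)

lemma finite_grp[simp]: "finite (grp ns)"
proof -
  have "grp ns \<subseteq> {xs. set xs \<subseteq> {0..int (sum_list ns)} \<and> length xs = length ns}"
  proof
    fix x assume x: "x \<in> grp ns"
    have "set x \<subseteq> {0..int (sum_list ns)}"
    proof
      fix z assume "z \<in> set x"
      then obtain i where i: "i < length x" "z = x ! i" by (auto simp: in_set_conv_nth)
      have "i < length ns" using x i by (simp add: grp_iff)
      hence "ns ! i \<le> sum_list ns" by (simp add: elem_le_sum_list)
      thus "z \<in> {0..int (sum_list ns)}" using x i \<open>i < length ns\<close> by (force simp: grp_iff)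
    qed
    thus "x \<in> {xs. set xs \<subseteq> {0..int (sum_list ns)} \<and> length xs = length ns}"
      using x by (simp add: grp_iff)
  qed
  thus ?thesis by (rule finite_subset) (rule finite_lists_length_eq, simp)
qed

lemma card_grp_pos: "card (grp ns) > 0"
  using finite_grp gzero_grp card_gt_0_iff by blast

lemma gsub_gsub: "w \<in> grp ns \<Longrightarrow> gsub ns u (gsub ns u w) = w"
  by (rule grp_eqI) (simp_all add: mod_diff_right_eq)

lemma gadd_gsub: "g \<in> grp ns \<Longrightarrow> gadd ns h (gsub ns g h) = g"
  by (rule grp_eqI) (simp_all add: mod_add_right_eq)

lemma gsub_gadd: "g \<in> grp ns \<Longrightarrow> gsub ns (gadd ns h g) h = g"
  by (rule grp_eqI) (simp_all add: mod_diff_left_eq)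

lemma gneg_gneg: "s \<in> grp ns \<Longrightarrow> gneg ns (gneg ns s) = s"
  by (rule grp_eqI) (simp_all add: mod_minus_eq)

lemma gsub_eq0: "x \<in> grp ns \<Longrightarrow> y \<in> grp ns \<Longrightarrow> gsub ns x y = gzero ns \<Longrightarrow> x = y"
proof (rule grp_eqI)
  fix i assume "i < length ns" "gsub ns x y = gzero ns"
  hence "(x ! i - y ! i) mod int (ns ! i) = 0" by (metis gsub_nth gzero_nth)
  thus "x ! i mod int (ns ! i) = y ! i mod int (ns ! i)" by (simp add: mod_eq_dvd_iff mod_0_imp_dvd)
qed

lemma gadd_eq0: "a \<in> grp ns \<Longrightarrow> s \<in> grp ns \<Longrightarrow> gadd ns a s = gzero ns \<Longrightarrow> gadd ns a a = gzero ns \<Longrightarrow> s = a"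
proof (rule grp_eqI)
  fix i assume i: "i < length ns" "gadd ns a s = gzero ns" "gadd ns a a = gzero ns"
  hence "(a ! i + s ! i) mod int (ns ! i) = 0" "(a ! i + a ! i) mod int (ns ! i) = 0"
    by (metis gadd_nth gzero_nth)+
  hence "int (ns ! i) dvd (a ! i + s ! i)" "int (ns ! i) dvd (a ! i + a ! i)" by auto
  hence "int (ns ! i) dvd ((a ! i + s ! i) - (a ! i + a ! i))" by (rule dvd_diff)
  hence "int (ns ! i) dvd (s ! i - a ! i)" by simp
  thus "s ! i mod int (ns ! i) = a ! i mod int (ns ! i)" by (simp add: mod_eq_dvd_iff)
qed

lemma chi_ee: "chi ns x g = (\<Prod>s<length ns. ee (ns ! s) (x ! s * g ! s))"
  unfolding chi_def ee_def by (simp add: mult_ac)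

lemma chi_sym: "chi ns x g = chi ns g x"
  unfolding chi_def by (simp add: mult_ac)

lemma chi_gadd: "chi ns g (gadd ns x y) = chi ns g x * chi ns g y"
  unfolding chi_ee prod.distrib[symmetric]
proof (rule prod.cong[OF refl])
  fix s assume s: "s \<in> {..<length ns}"
  hence m: "ns ! s \<ge> 1" using pos by simp
  have "ee (ns ! s) (g ! s * gadd ns x y ! s) = ee (ns ! s) (g ! s * x ! s + g ! s * y ! s)"
    using s by (intro ee_cong[OF m]) (simp add: mod_mult_right_eq ring_distribs)
  thus "ee (ns ! s) (g ! s * gadd ns x y ! s) = ee (ns ! s) (g ! s * x ! s) * ee (ns ! s) (g ! s * y ! s)"
    by (simp add: ee_add)
qed

lemma chi_cnj: "cnj (chi ns g x) = (\<Prod>s<length ns. ee (ns ! s) (- (g ! s * x ! s)))"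
  unfolding chi_ee by (simp add: ee_cnj)

lemma chi_gsub: "chi ns g (gsub ns x y) = chi ns g x * cnj (chi ns g y)"
  unfolding chi_cnj unfolding chi_ee prod.distrib[symmetric]
proof (rule prod.cong[OF refl])
  fix s assume s: "s \<in> {..<length ns}"
  hence m: "ns ! s \<ge> 1" using pos by simp
  have "ee (ns ! s) (g ! s * gsub ns x y ! s) = ee (ns ! s) (g ! s * x ! s + - (g ! s * y ! s))"
    using s by (intro ee_cong[OF m]) (simp add: mod_mult_right_eq ring_distribs)
  thus "ee (ns ! s) (g ! s * gsub ns x y ! s) = ee (ns ! s) (g ! s * x ! s) * ee (ns ! s) (- (g ! s * y ! s))"
    by (metis ee_add)
qed

lemma chi_gneg: "chi ns g (gneg ns x) = cnj (chi ns g x)"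
  unfolding chi_cnj unfolding chi_ee
proof (rule prod.cong[OF refl])
  fix s assume s: "s \<in> {..<length ns}"
  hence m: "ns ! s \<ge> 1" using pos by simp
  show "ee (ns ! s) (g ! s * gneg ns x ! s) = ee (ns ! s) (- (g ! s * x ! s))"
    using s by (intro ee_cong[OF m]) (simp add: mod_mult_right_eq)
qed

lemma chi_gzero[simp]: "chi ns (gzero ns) g = 1" "chi ns g (gzero ns) = 1"
  unfolding chi_ee by simp_all

lemma norm_chi[simp]: "cmod (chi ns g x) = 1"
  unfolding chi_ee by (simp add: prod_norm[symmetric])

lemma chi_times_cnj[simp]: "chi ns g x * cnj (chi ns g x) = 1"
  by (metis complex_norm_square norm_chi of_real_1 one_power2)

lemma chi_ne0[simp]: "chi ns g x \<noteq> 0"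
  by (metis norm_chi norm_zero zero_neq_one)

end


context
  fixes ns :: "nat list"
  assumes pos: "\<forall>i<length ns. ns ! i \<ge> 1"
begin

abbreviation "G \<equiv> grp ns"
abbreviation "nG \<equiv> card (grp ns)"

lemmas [simp] = gadd_grp[OF pos] gsub_grp[OF pos] gneg_grp[OF pos] gzero_grp[OF pos] finite_grp[OF pos]
  gadd_nth[OF pos] gsub_nth[OF pos] gneg_nth[OF pos] gzero_nth[OF pos]

lemma gsub_self: "gsub ns u u = gzero ns"
  by (rule grp_eqI[OF pos]) (simp_all add: pos)

lemma orth: assumes a: "a \<in> G"
  shows "(\<Sum>g\<in>G. chi ns a g) = (if a = gzero ns then of_nat nG else 0)"
proof (cases "a = gzero ns")
  case True thus ?thesis using pos by simp
next
  case False
  obtain i where i: "i < length ns" "a ! i \<noteq> 0"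
  proof -
    { assume "\<forall>i<length ns. a ! i = 0"
      hence "a = gzero ns" using a pos by (intro grp_eqI) auto
      with False have False by simp }
    thus ?thesis using that by blast
  qed
  have ai: "0 < a ! i" "a ! i < int (ns ! i)" using a i by (auto simp: grp_iff[OF pos])
  define h where "h = map (\<lambda>j. if j = i then 1 else 0 :: int) [0..<length ns]"
  have hn: "\<And>s. s < length ns \<Longrightarrow> h ! s = (if s = i then 1 else 0)" by (simp add: h_def)
  have hG: "h \<in> G"
    unfolding grp_iff[OF pos] using ai hn pos'[OF pos] by (simp add: h_def) 
  have "chi ns a h = (\<Prod>s<length ns. if s = i then ee (ns ! i) (a ! i) else 1)"
    unfolding chi_ee[OF pos] by (rule prod.cong) (auto simp: hn)
  also have "\<dots> = ee (ns ! i) (a ! i)" using i by (simp add: prod.delta)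
  finally have cah: "chi ns a h \<noteq> 1" using ee_ne1 ai by simp
  have "(\<Sum>g\<in>G. chi ns a g) = (\<Sum>g\<in>G. chi ns a (gadd ns h g))"
    by (rule sum.reindex_bij_witness[where j = "\<lambda>b. gsub ns b h" and i = "gadd ns h"])
       (simp_all add: gsub_gadd[OF pos] gadd_gsub[OF pos])
  also have "\<dots> = chi ns a h * (\<Sum>g\<in>G. chi ns a g)"
    by (simp add: chi_gadd[OF pos] sum_distrib_left)
  finally have "(1 - chi ns a h) * (\<Sum>g\<in>G. chi ns a g) = 0" by (simp add: algebra_simps)
  thus ?thesis using cah False by simp
qed

lemma orth1: assumes "u \<in> G" "v \<in> G"
  shows "(\<Sum>g\<in>G. chi ns g u * cnj (chi ns g v)) = (if u = v then of_nat nG else 0)"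
proof -
  have "(\<Sum>g\<in>G. chi ns g u * cnj (chi ns g v)) = (\<Sum>g\<in>G. chi ns (gsub ns u v) g)"
    by (rule sum.cong) (simp_all add: chi_gsub[OF pos] chi_sym[OF pos, where x = "gsub ns u v"])
  also have "\<dots> = (if u = v then of_nat nG else 0)"
    using orth[of "gsub ns u v"] gsub_eq0[OF pos, of u v] assms by (auto simp: pos gsub_self)
  finally show ?thesis .
qed

lemma orth2: assumes "h \<in> G" "g \<in> G"
  shows "(\<Sum>u\<in>G. chi ns h u * cnj (chi ns g u)) = (if h = g then of_nat nG else 0)"
proof -
  have "(\<Sum>u\<in>G. chi ns h u * cnj (chi ns g u)) = (\<Sum>u\<in>G. chi ns u h * cnj (chi ns u g))"
    by (rule sum.cong[OF refl]) (metis chi_sym[OF pos])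
  thus ?thesis using orth1[OF assms] by simp
qed

context
  fixes S :: "int list set"
  assumes SG: "S \<subseteq> G" and Sneg: "gneg ns ` S = S"
begin

lemma finS: "finite S"
  using SG finite_subset finite_grp[OF pos] by blast

lemma eig_neg: "(\<Sum>s\<in>S. chi ns g (gneg ns s)) = eigval ns S g"
proof -
  have inj: "inj_on (gneg ns) S"
    by (rule inj_on_inverseI[where g = "gneg ns"]) (use SG gneg_gneg[OF pos] in auto)
  have "eigval ns S g = (\<Sum>s\<in>gneg ns ` S. chi ns g s)" by (simp add: eigval_def Sneg)
  also have "\<dots> = (\<Sum>s\<in>S. chi ns g (gneg ns s))" by (simp add: sum.reindex[OF inj])
  finally show ?thesis by simp
qed

lemma F1: "(\<Sum>s\<in>S. chi ns g (gsub ns u s)) = eigval ns S g * chi ns g u"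
proof -
  have "(\<Sum>s\<in>S. chi ns g (gsub ns u s)) = (\<Sum>s\<in>S. chi ns g u * chi ns g (gneg ns s))"
    by (simp add: chi_gsub[OF pos] chi_gneg[OF pos])
  also have "\<dots> = chi ns g u * eigval ns S g" by (simp add: sum_distrib_left[symmetric] eig_neg)
  finally show ?thesis by simp
qed

lemma L_adj: assumes u: "u \<in> G"
  shows "(\<Sum>w\<in>G. adj ns S u w * f w) = (\<Sum>s\<in>S. f (gsub ns u s))"
proof -
  have "(\<Sum>w\<in>G. adj ns S u w * f w) = (\<Sum>w\<in>G. if gsub ns u w \<in> S then f w else 0)"
    by (rule sum.cong) (auto simp: adj_def)
  also have "\<dots> = (\<Sum>w\<in>{w\<in>G. gsub ns u w \<in> S}. f w)"
    by (simp add: sum.inter_filter[OF finite_grp[OF pos]])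
  also have "\<dots> = (\<Sum>s\<in>S. f (gsub ns u s))"
    by (rule sum.reindex_bij_witness[where i = "gsub ns u" and j = "gsub ns u"])
       (use SG in \<open>auto simp: gsub_gsub[OF pos] pos\<close>)
  finally show ?thesis .
qed

lemma F2: assumes "u \<in> G" "v \<in> G"
  shows "adjpow ns S k u v = (\<Sum>g\<in>G. eigval ns S g ^ k * chi ns g u * cnj (chi ns g v)) / of_nat nG"
  using assms(1)
proof (induction k arbitrary: u)
  case 0
  have "nG \<noteq> 0" using card_grp_pos[OF pos] by linarith
  moreover have "G \<noteq> {}" using gzero_grp[OF pos] by blast
  ultimately show ?case using orth1[OF 0 assms(2)] by simp
next
  case (Suc k)
  let ?F = "\<lambda>w. (\<Sum>g\<in>G. eigval ns S g ^ k * chi ns g w * cnj (chi ns g v)) / of_nat nG"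
  have "adjpow ns S (Suc k) u v = (\<Sum>w\<in>G. adj ns S u w * ?F w)"
    using Suc.IH by simp
  also have "\<dots> = (\<Sum>s\<in>S. ?F (gsub ns u s))" by (rule L_adj[OF Suc.prems])
  also have "\<dots> = (\<Sum>g\<in>G. eigval ns S g ^ k * cnj (chi ns g v) * (\<Sum>s\<in>S. chi ns g (gsub ns u s))) / of_nat nG"
    by (simp add: sum_divide_distrib[symmetric] sum_distrib_left sum.swap[of _ S] mult_ac)
  also have "\<dots> = (\<Sum>g\<in>G. eigval ns S g ^ Suc k * chi ns g u * cnj (chi ns g v)) / of_nat nG"
    by (simp add: F1 mult_ac)
  finally show ?case .
qed

lemma exp_sums: "(\<lambda>k. z ^ k / of_nat (fact k)) sums exp (z :: complex)"
proof -
  have "(\<lambda>n. z ^ n /\<^sub>R fact n) sums exp z" by (rule exp_converges)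
  moreover have "(\<lambda>n. z ^ n /\<^sub>R fact n) = (\<lambda>k. z ^ k / of_nat (fact k))"
    by (rule ext) (simp add: scaleR_conv_of_real divide_inverse mult.commute)
  ultimately show ?thesis by simp
qed

lemma F3: assumes "u \<in> G" "v \<in> G"
  shows "transH ns S t u v = (\<Sum>g\<in>G. exp (\<i> * of_real t * eigval ns S g) * chi ns g u * cnj (chi ns g v)) / of_nat nG"
proof -
  define c where "c g = chi ns g u * cnj (chi ns g v) / of_nat nG" for g
  have "(\<lambda>k. (\<i> * of_real t) ^ k / of_nat (fact k) * adjpow ns S k u v)
      = (\<lambda>k. \<Sum>g\<in>G. c g * ((\<i> * of_real t * eigval ns S g) ^ k / of_nat (fact k)))"
    by (rule ext) (simp add: F2[OF assms] c_def sum_distrib_left sum_divide_distrib power_mult_distrib mult_ac)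
  moreover have "(\<lambda>k. \<Sum>g\<in>G. c g * ((\<i> * of_real t * eigval ns S g) ^ k / of_nat (fact k)))
     sums (\<Sum>g\<in>G. c g * exp (\<i> * of_real t * eigval ns S g))"
    by (intro sums_sum sums_mult exp_sums)
  ultimately have "(\<lambda>k. (\<i> * of_real t) ^ k / of_nat (fact k) * adjpow ns S k u v)
     sums (\<Sum>g\<in>G. c g * exp (\<i> * of_real t * eigval ns S g))" by simp
  hence "transH ns S t u v = (\<Sum>g\<in>G. c g * exp (\<i> * of_real t * eigval ns S g))"
    unfolding transH_def by (rule sums_unique[symmetric])
  thus ?thesis by (simp add: c_def sum_divide_distrib mult_ac)
qed

end
end


lemma eig_algint:
  assumes pos: "\<forall>i<length ns. ns ! i \<ge> 1" and SG: "S \<subseteq> grp ns" and Sneg: "gneg ns ` S = S"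
    and g: "g \<in> grp ns"
  shows "algebraic_int (eigval ns S g)"
proof -
  let ?n = "card (grp ns)"
  obtain e where e: "bij_betw e {0..<?n} (grp ns)"
    using ex_bij_betw_nat_finite[OF finite_grp[OF pos]] by blast
  define Mi :: "int mat" where "Mi = mat ?n ?n (\<lambda>(i,j). if gsub ns (e i) (e j) \<in> S then 1 else 0)"
  define M :: "complex mat" where "M = map_mat of_int Mi"
  define v where "v = vec ?n (\<lambda>i. chi ns g (e i))"
  have Mi: "Mi \<in> carrier_mat ?n ?n" by (simp add: Mi_def)
  have M: "M \<in> carrier_mat ?n ?n" by (simp add: M_def Mi_def)
  have eiG: "i < ?n \<Longrightarrow> e i \<in> grp ns" for i using e by (auto simp: bij_betw_def)
  have Mv: "M *\<^sub>v v = eigval ns S g \<cdot>\<^sub>v v"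
  proof (rule eq_vecI)
    show "dim_vec (M *\<^sub>v v) = dim_vec (eigval ns S g \<cdot>\<^sub>v v)" by (simp add: M_def Mi_def v_def)
    fix i assume "i < dim_vec (eigval ns S g \<cdot>\<^sub>v v)"
    hence i: "i < ?n" by (simp add: v_def)
    have "(M *\<^sub>v v) $ i = (\<Sum>j = 0..<?n. adj ns S (e i) (e j) * chi ns g (e j))"
      using i by (auto simp: M_def Mi_def v_def scalar_prod_def adj_def intro!: sum.cong)
    also have "\<dots> = (\<Sum>w\<in>grp ns. adj ns S (e i) w * chi ns g w)"
      by (rule sum.reindex_bij_betw[OF e])
    also have "\<dots> = (\<Sum>s\<in>S. chi ns g (gsub ns (e i) s))"
      by (rule L_adj[OF pos SG Sneg eiG[OF i]])
    also have "\<dots> = eigval ns S g * chi ns g (e i)" by (rule F1[OF pos SG Sneg])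
    finally show "(M *\<^sub>v v) $ i = (eigval ns S g \<cdot>\<^sub>v v) $ i" using i by (simp add: v_def)
  qed
  have n0: "0 < ?n" by (rule card_grp_pos[OF pos])
  have "v \<noteq> 0\<^sub>v ?n"
  proof
    assume "v = 0\<^sub>v ?n"
    hence "v $ 0 = 0" using n0 by simp
    thus False using n0 chi_ne0[OF pos] by (simp add: v_def)
  qed
  hence "eigenvector M v (eigval ns S g)"
    unfolding eigenvector_def using Mv M by (simp add: v_def)
  hence "eigenvalue M (eigval ns S g)" unfolding eigenvalue_def by blast
  hence root: "poly (char_poly M) (eigval ns S g) = 0" using eigenvalue_root_char_poly[OF M] by simp
  have cp: "char_poly M = of_int_poly (char_poly Mi)"
    unfolding M_def using of_int_hom.char_poly_hom[OF Mi] by simp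
  have "monic (char_poly Mi)" using degree_monic_char_poly[OF Mi] by simp
  thus ?thesis unfolding algebraic_int_altdef_ipoly using root cp by auto
qed



lemma sum_inC: "finite A \<Longrightarrow> (\<forall>x\<in>A. \<exists>k::int. f x = (c::complex) * of_int k) \<Longrightarrow> \<exists>k::int. sum f A = c * of_int k"
proof (induction A rule: finite_induct)
  case empty thus ?case by (intro exI[of _ 0]) simp
next
  case (insert z A)
  then obtain k1 k2 where "f z = c * of_int k1" "sum f A = c * of_int k2" by auto
  thus ?case using insert by (intro exI[of _ "k1 + k2"]) (simp add: ring_distribs)
qed

lemma parallelogram: assumes "cmod (a + b) = 1" "cmod (a - b) = 1"
  shows "(cmod a)\<^sup>2 + (cmod b)\<^sup>2 = 1"
proof -
  have "(cmod (a + b))\<^sup>2 = 1" "(cmod (a - b))\<^sup>2 = 1" using assms by simp_all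
  hence "(Re a + Re b)\<^sup>2 + (Im a + Im b)\<^sup>2 = 1" "(Re a - Re b)\<^sup>2 + (Im a - Im b)\<^sup>2 = 1"
    by (simp_all add: cmod_power2)
  hence "(Re a)\<^sup>2 + (Im a)\<^sup>2 + ((Re b)\<^sup>2 + (Im b)\<^sup>2) = 1"
    by (simp add: power2_sum power2_diff)
  thus ?thesis by (simp add: cmod_power2)
qed

context
  fixes ns :: "nat list" and S :: "int list set"
  assumes pos: "\<forall>i<length ns. ns ! i \<ge> 1"
    and SG: "S \<subseteq> grp ns" and Sneg: "gneg ns ` S = S" and S0: "gzero ns \<notin> S"
begin

lemmas [simp] = gadd_grp[OF pos] gsub_grp[OF pos] gneg_grp[OF pos] gzero_grp[OF pos] finite_grp[OF pos]
  chi_ne0[OF pos] chi_times_cnj[OF pos] chi_gzero[OF pos]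

lemma nG_ne0: "card (grp ns) \<noteq> 0" using card_grp_pos[OF pos] by linarith

lemma L_pm: assumes "gadd ns a a = gzero ns" shows "chi ns a g = 1 \<or> chi ns a g = -1"
proof -
  have "chi ns g a * chi ns g a = 1"
    using chi_gadd[OF pos, of g a a] assms by simp
  hence "(chi ns a g)\<^sup>2 = 1" by (simp add: chi_sym[OF pos, of a g] power2_eq_square)
  thus ?thesis by (simp add: power2_eq_1_iff)
qed

lemma L_g1: assumes "a \<in> grp ns" "a \<noteq> gzero ns" "\<forall>g\<in>grp ns. chi ns a g = 1 \<or> chi ns a g = -1"
  shows "\<exists>g1\<in>grp ns. chi ns a g1 = -1"
proof (rule ccontr)
  assume "\<not> ?thesis"
  hence "\<forall>g\<in>grp ns. chi ns a g = 1" using assms(3) by blast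
  hence "(\<Sum>g\<in>grp ns. chi ns a g) = of_nat (card (grp ns))" by simp
  thus False using orth[OF pos assms(1)] assms(2) nG_ne0 by simp
qed

lemma L_sum_chi: assumes "a \<in> grp ns" "a \<noteq> gzero ns"
  shows "(\<Sum>g\<in>grp ns. 1 + chi ns a g) = of_nat (card (grp ns))"
    "(\<Sum>g\<in>grp ns. 1 - chi ns a g) = of_nat (card (grp ns))"
  using orth[OF pos assms(1)] assms(2) by (simp_all add: sum.distrib sum_subtractf)

lemma L_sum_eig: assumes a: "a \<in> grp ns" "gadd ns a a = gzero ns"
  shows "(\<Sum>g\<in>grp ns. (1 + chi ns a g) * eigval ns S g) = of_nat (card (grp ns)) * (if a \<in> S then 1 else 0)"
    "(\<Sum>g\<in>grp ns. (1 - chi ns a g) * eigval ns S g) = - of_nat (card (grp ns)) * (if a \<in> S then 1 else 0)"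
proof -
  have sG: "s \<in> grp ns" if "s \<in> S" for s using that SG by auto
  have s0: "(\<Sum>g\<in>grp ns. chi ns s g) = 0" if "s \<in> S" for s
    using orth[OF pos sG[OF that]] S0 that by auto
  have s1: "(\<Sum>g\<in>grp ns. chi ns (gadd ns a s) g) = (if s = a then of_nat (card (grp ns)) else 0)"
    if "s \<in> S" for s
    using orth[OF pos, of "gadd ns a s"] gadd_eq0[OF pos a(1) sG[OF that]] a(2) by auto
  have prod: "chi ns a g * chi ns g s = chi ns (gadd ns a s) g" for g s
    by (simp add: chi_sym[OF pos, of _ g] chi_gadd[OF pos])
  have finS: "finite S" using SG finite_subset finite_grp[OF pos] by blast
  have "(\<Sum>g\<in>grp ns. (1 + chi ns a g) * eigval ns S g)
      = (\<Sum>s\<in>S. (\<Sum>g\<in>grp ns. chi ns s g) + (\<Sum>g\<in>grp ns. chi ns (gadd ns a s) g))"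
  proof -
    have pt: "(1 + chi ns a g) * chi ns g s = chi ns s g + chi ns (gadd ns a s) g" for g s
      using prod[of g s] chi_sym[OF pos, of s g] by (simp add: distrib_right)
    have "(\<Sum>g\<in>grp ns. (1 + chi ns a g) * eigval ns S g)
       = (\<Sum>g\<in>grp ns. \<Sum>s\<in>S. chi ns s g + chi ns (gadd ns a s) g)"
      by (simp only: eigval_def sum_distrib_left pt)
    also have "\<dots> = (\<Sum>s\<in>S. \<Sum>g\<in>grp ns. chi ns s g + chi ns (gadd ns a s) g)"
      by (rule sum.swap)
    finally show ?thesis by (simp add: sum.distrib)
  qed
  also have "\<dots> = (\<Sum>s\<in>S. if s = a then of_nat (card (grp ns)) else 0)"
    by (rule sum.cong) (simp_all add: s0 s1)
  finally show "(\<Sum>g\<in>grp ns. (1 + chi ns a g) * eigval ns S g) = of_nat (card (grp ns)) * (if a \<in> S then 1 else 0)"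
    using finS by simp
  have "(\<Sum>g\<in>grp ns. (1 - chi ns a g) * eigval ns S g)
      = (\<Sum>s\<in>S. (\<Sum>g\<in>grp ns. chi ns s g) - (\<Sum>g\<in>grp ns. chi ns (gadd ns a s) g))"
  proof -
    have pt: "(1 - chi ns a g) * chi ns g s = chi ns s g - chi ns (gadd ns a s) g" for g s
      using prod[of g s] chi_sym[OF pos, of s g] by (simp add: left_diff_distrib)
    have "(\<Sum>g\<in>grp ns. (1 - chi ns a g) * eigval ns S g)
       = (\<Sum>g\<in>grp ns. \<Sum>s\<in>S. chi ns s g - chi ns (gadd ns a s) g)"
      by (simp only: eigval_def sum_distrib_left pt)
    also have "\<dots> = (\<Sum>s\<in>S. \<Sum>g\<in>grp ns. chi ns s g - chi ns (gadd ns a s) g)"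
      by (rule sum.swap)
    finally show ?thesis by (simp add: sum_subtractf)
  qed
  also have "\<dots> = (\<Sum>s\<in>S. if s = a then - of_nat (card (grp ns)) else 0)"
    by (rule sum.cong) (simp_all add: s0 s1)
  finally show "(\<Sum>g\<in>grp ns. (1 - chi ns a g) * eigval ns S g) = - of_nat (card (grp ns)) * (if a \<in> S then 1 else 0)"
    using finS by simp
qed

end


lemma integral_part:
  fixes ns :: "nat list" and S :: "int list set" and \<alpha> \<beta> :: complex and t :: real
  assumes pos: "\<forall>i<length ns. ns ! i \<ge> 1"
    and SG: "S \<subseteq> grp ns" and Sneg: "gneg ns ` S = S" and S0: "gzero ns \<notin> S"
    and aG: "a \<in> grp ns" and a0: "a \<noteq> gzero ns" and aa: "gadd ns a a = gzero ns"
    and b0: "\<beta> \<noteq> 0"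
    and KF: "\<forall>g\<in>grp ns. exp (\<i> * of_real t * eigval ns S g) = \<alpha> + \<beta> * chi ns a g"
  shows "integral_cayley ns S"
proof -
  define E where "E g = exp (\<i> * of_real t * eigval ns S g)" for g
  define n where "n = card (grp ns)"
  define Ind :: complex where "Ind = (if a \<in> S then 1 else 0)"
  have n0: "n \<noteq> 0" unfolding n_def by (rule nG_ne0[OF pos SG Sneg S0])
  have finS: "finite S" using SG finite_subset finite_grp[OF pos] by blast
  have pm: "chi ns a g = 1 \<or> chi ns a g = -1" for g by (rule L_pm[OF pos SG Sneg S0 aa])
  obtain g1 where g1: "g1 \<in> grp ns" "chi ns a g1 = -1"
    using L_g1[OF pos SG Sneg S0 aG a0] pm by blast
  have E0: "E (gzero ns) = \<alpha> + \<beta>" using KF gzero_grp[OF pos] chi_gzero[OF pos] by (simp add: E_def)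
  have E1: "E g1 = \<alpha> - \<beta>" using KF g1 by (simp add: E_def)
  have t0: "t \<noteq> 0"
  proof
    assume "t = 0"
    hence "E (gzero ns) = 1" "E g1 = 1" by (simp_all add: E_def)
    hence "\<alpha> + \<beta> = 1" "\<alpha> - \<beta> = 1" using E0 E1 by simp_all
    hence "2 * \<beta> = 0" by (metis add_diff_cancel_left' diff_add_cancel diff_diff_eq2 mult_2 diff_self)
    thus False using b0 by simp
  qed
  define l0 where "l0 = eigval ns S (gzero ns)"
  have l0: "l0 = of_nat (card S)" by (simp add: l0_def eigval_def chi_gzero[OF pos])
  define l1 where "l1 = eigval ns S g1"
  define c where "c = complex_of_real (2 * pi / t)"
  have diff: "\<exists>k. eigval ns S g - eigval ns S h = c * of_int k" if "E g = E h" for g h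
  proof -
    from that obtain k where k: "\<i> * of_real t * eigval ns S g = \<i> * of_real t * eigval ns S h + complex_of_real (real_of_int (2 * k) * pi) * \<i>"
      unfolding E_def exp_eq by blast
    have "\<i> * of_real t * (eigval ns S g - eigval ns S h) = \<i> * of_real t * (c * of_int k)"
      using k t0 by (simp add: c_def algebra_simps)
    hence "eigval ns S g - eigval ns S h = c * of_int k" using t0 by simp
    thus ?thesis by blast
  qed
  have d0: "\<exists>k. (1 + chi ns a g) * (eigval ns S g - l0) = c * of_int k" if "g \<in> grp ns" for g
  proof (cases "chi ns a g = 1")
    case True
    hence "E g = E (gzero ns)" using KF that E0 by (simp add: E_def)
    then obtain k where "eigval ns S g - l0 = c * of_int k" using diff l0_def by blast
    hence "(1 + chi ns a g) * (eigval ns S g - l0) = c * of_int (2 * k)" using True by simp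
    thus ?thesis by blast
  next
    case False
    hence "chi ns a g = -1" using pm by blast
    thus ?thesis by (intro exI[of _ 0]) simp
  qed
  have d1: "\<exists>k. (1 - chi ns a g) * (eigval ns S g - l1) = c * of_int k" if "g \<in> grp ns" for g
  proof (cases "chi ns a g = -1")
    case True
    hence "E g = E g1" using KF that E1 by (simp add: E_def)
    then obtain k where "eigval ns S g - l1 = c * of_int k" using diff l1_def by blast
    hence "(1 - chi ns a g) * (eigval ns S g - l1) = c * of_int (2 * k)" using True by simp
    thus ?thesis by blast
  next
    case False
    hence "chi ns a g = 1" using pm by blast
    thus ?thesis by (intro exI[of _ 0]) simp
  qed
  obtain K where K: "(\<Sum>g\<in>grp ns. (1 + chi ns a g) * (eigval ns S g - l0)) = c * of_int K"
    using sum_inC[OF finite_grp[OF pos], of "\<lambda>g. (1 + chi ns a g) * (eigval ns S g - l0)" c] d0 by blast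
  obtain M where M: "(\<Sum>g\<in>grp ns. (1 - chi ns a g) * (eigval ns S g - l1)) = c * of_int M"
    using sum_inC[OF finite_grp[OF pos], of "\<lambda>g. (1 - chi ns a g) * (eigval ns S g - l1)" c] d1 by blast
  have sK: "(\<Sum>g\<in>grp ns. (1 + chi ns a g) * (eigval ns S g - l0)) = of_nat n * Ind - of_nat n * l0"
    using L_sum_eig(1)[OF pos SG Sneg S0 aG aa] L_sum_chi(1)[OF pos SG Sneg S0 aG a0]
    by (simp add: right_diff_distrib sum_subtractf sum_distrib_right[symmetric] n_def Ind_def)
  have sM: "(\<Sum>g\<in>grp ns. (1 - chi ns a g) * (eigval ns S g - l1)) = - of_nat n * Ind - of_nat n * l1"
    using L_sum_eig(2)[OF pos SG Sneg S0 aG aa] L_sum_chi(2)[OF pos SG Sneg S0 aG a0]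
    by (simp add: right_diff_distrib sum_subtractf sum_distrib_right[symmetric] n_def Ind_def)
  show ?thesis
  proof (cases "K = 0")
    case True
    hence "of_nat n * Ind = of_nat n * l0" using K sK by simp
    hence "Ind = of_nat (card S)" using n0 l0 by simp
    show ?thesis unfolding integral_cayley_def
    proof
      fix g assume g: "g \<in> grp ns"
      show "eigval ns S g \<in> \<int>"
      proof (cases "a \<in> S")
        case True
        hence "card S = 1" using \<open>Ind = of_nat (card S)\<close> by (simp add: Ind_def)
        hence "S = {a}" using True finS by (metis card_1_singletonE singletonD)
        thus ?thesis using pm[of g] chi_sym[OF pos, of g a] by (auto simp: eigval_def)
      next
        case False
        hence "card S = 0" using \<open>Ind = of_nat (card S)\<close> by (simp add: Ind_def)
        hence "S = {}" using finS by simp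
        thus ?thesis by (simp add: eigval_def)
      qed
    qed
  next
    case False
    have IndQ: "Ind \<in> \<rat>" by (simp add: Ind_def)
    have cQ: "c \<in> \<rat>"
    proof -
      have "c = (of_nat n * Ind - of_nat n * l0) / of_int K" using K sK False by (simp add: field_simps)
      thus ?thesis using IndQ l0 by simp
    qed
    have l1Q: "l1 \<in> \<rat>"
    proof -
      have "l1 = - (c * of_int M + of_nat n * Ind) / of_nat n" using M sM n0 by (simp add: field_simps)
      thus ?thesis using IndQ cQ by simp
    qed
    show ?thesis unfolding integral_cayley_def
    proof
      fix g assume g: "g \<in> grp ns"
      have "eigval ns S g \<in> \<rat>"
      proof (cases "chi ns a g = 1")
        case True
        hence "E g = E (gzero ns)" using KF g E0 by (simp add: E_def)
        then obtain k where "eigval ns S g - l0 = c * of_int k" using diff l0_def by blast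
        hence "eigval ns S g = l0 + c * of_int k" by (simp add: algebra_simps)
        thus ?thesis using cQ l0 by simp
      next
        case False
        hence "chi ns a g = -1" using pm by blast
        hence "E g = E g1" using KF g E1 by (simp add: E_def)
        then obtain k where "eigval ns S g - l1 = c * of_int k" using diff l1_def by blast
        hence "eigval ns S g = l1 + c * of_int k" by (simp add: algebra_simps)
        thus ?thesis using cQ l1Q by simp
      qed
      thus "eigval ns S g \<in> \<int>"
        using rational_algebraic_int_is_int eig_algint[OF pos SG Sneg g] by blast
    qed
  qed
qed



theorem theorem2p2:
  fixes ns :: "nat list" and S :: "int list set" and \<alpha> \<beta> :: complex
    and x y :: "int list" and t :: real
  assumes "\<forall>i<length ns. ns ! i \<ge> 1"
    and "even (prod_list ns)"
    and "S \<subseteq> grp ns"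
    and "gneg ns ` S = S"
    and "gzero ns \<notin> S"
    and "\<alpha> \<noteq> 0" and "\<beta> \<noteq> 0"
    and "x \<in> grp ns" and "y \<in> grp ns" and "x \<noteq> y"
  shows "frac_revival ns S \<alpha> \<beta> x y t \<longleftrightarrow>
    (has_order_two ns (gsub ns x y)
     \<and> integral_cayley ns S
     \<and> (\<forall>g\<in>grp ns. chi ns (gsub ns x y) g = 1 \<longrightarrow> exp (\<i> * of_real t * eigval ns S g) = \<alpha> + \<beta>)
     \<and> (\<forall>g\<in>grp ns. chi ns (gsub ns x y) g = -1 \<longrightarrow> exp (\<i> * of_real t * eigval ns S g) = \<alpha> - \<beta>))"
proof -
  note pos = assms(1) and SG = assms(3) and Sneg = assms(4) and S0 = assms(5)
    and b0 = assms(7) and xG = assms(8) and yG = assms(9) and xy = assms(10)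
  note [simp] = gadd_grp[OF pos] gsub_grp[OF pos] gneg_grp[OF pos] gzero_grp[OF pos] finite_grp[OF pos]
    chi_ne0[OF pos] chi_times_cnj[OF pos] chi_gzero[OF pos]
  define a where "a = gsub ns x y"
  define E where "E g = exp (\<i> * of_real t * eigval ns S g)" for g
  define n where "n = card (grp ns)"
  have n0: "n \<noteq> 0" unfolding n_def by (rule nG_ne0[OF pos SG Sneg S0])
  have aG: "a \<in> grp ns" by (simp add: a_def)
  have a0: "a \<noteq> gzero ns" using gsub_eq0[OF pos xG yG] xy by (auto simp: a_def)
  have chia: "chi ns g a = chi ns g x * cnj (chi ns g y)" for g
    by (simp add: a_def chi_gsub[OF pos])
  have syma: "chi ns a g = chi ns g a" for g by (rule chi_sym[OF pos])
  have F3x: "transH ns S t u x = (\<Sum>g\<in>grp ns. E g * chi ns g u * cnj (chi ns g x)) / of_nat n"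
    if "u \<in> grp ns" for u
    unfolding E_def n_def by (rule F3[OF pos SG Sneg that xG])
  show ?thesis
  proof
    assume FR: "frac_revival ns S \<alpha> \<beta> x y t"
    hence hFR: "\<And>u. u \<in> grp ns \<Longrightarrow> transH ns S t u x = (if u = x then \<alpha> else 0) + (if u = y then \<beta> else 0)"
      unfolding frac_revival_def by blast
    have KF: "E g = \<alpha> + \<beta> * chi ns g a" if gG: "g \<in> grp ns" for g
    proof -
      have "(\<Sum>u\<in>grp ns. transH ns S t u x * cnj (chi ns g u))
          = (\<Sum>u\<in>grp ns. (if u = x then \<alpha> * cnj (chi ns g x) else 0) + (if u = y then \<beta> * cnj (chi ns g y) else 0))"
        by (rule sum.cong) (auto simp: hFR distrib_right)
      also have "\<dots> = \<alpha> * cnj (chi ns g x) + \<beta> * cnj (chi ns g y)"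
        using xG yG by (simp add: sum.distrib)
      finally have 1: "(\<Sum>u\<in>grp ns. transH ns S t u x * cnj (chi ns g u)) = \<alpha> * cnj (chi ns g x) + \<beta> * cnj (chi ns g y)" .
      have "(\<Sum>u\<in>grp ns. transH ns S t u x * cnj (chi ns g u))
          = (\<Sum>u\<in>grp ns. \<Sum>h\<in>grp ns. E h * cnj (chi ns h x) / of_nat n * (chi ns h u * cnj (chi ns g u)))"
        by (rule sum.cong[OF refl]) (simp add: F3x sum_divide_distrib sum_distrib_right sum_distrib_left mult_ac)
      also have "\<dots> = (\<Sum>h\<in>grp ns. \<Sum>u\<in>grp ns. E h * cnj (chi ns h x) / of_nat n * (chi ns h u * cnj (chi ns g u)))"
        by (rule sum.swap)
      also have "\<dots> = (\<Sum>h\<in>grp ns. E h * cnj (chi ns h x) / of_nat n * (\<Sum>u\<in>grp ns. chi ns h u * cnj (chi ns g u)))"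
        by (simp add: sum_distrib_left)
      also have "\<dots> = (\<Sum>h\<in>grp ns. if h = g then E g * cnj (chi ns g x) else 0)"
        by (rule sum.cong[OF refl]) (use n0 gG in \<open>simp add: orth2[OF pos _ gG] n_def\<close>)
      also have "\<dots> = E g * cnj (chi ns g x)" using gG by simp
      finally have "E g * cnj (chi ns g x) = \<alpha> * cnj (chi ns g x) + \<beta> * cnj (chi ns g y)" using 1 by simp
      hence "E g * cnj (chi ns g x) * chi ns g x = (\<alpha> * cnj (chi ns g x) + \<beta> * cnj (chi ns g y)) * chi ns g x"
        by simp
      moreover have "cnj (chi ns g x) * chi ns g x = 1" using chi_times_cnj[OF pos, of g x] by (simp add: mult.commute)
      ultimately show ?thesis by (simp add: chia algebra_simps)
    qed
    have eneg: "eigval ns S (gneg ns g) = eigval ns S g" for g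
    proof -
      have "eigval ns S (gneg ns g) = (\<Sum>s\<in>S. chi ns g (gneg ns s))"
        unfolding eigval_def
        by (rule sum.cong[OF refl]) (simp add: chi_sym[OF pos, of "gneg ns g"] chi_gneg[OF pos] chi_sym[OF pos, of _ g])
      thus ?thesis using eig_neg[OF pos SG Sneg] by simp
    qed
    have aa: "gadd ns a a = gzero ns"
    proof -
      have one: "chi ns (gadd ns a a) g = 1" if gG: "g \<in> grp ns" for g
      proof -
        have "E (gneg ns g) = E g" by (simp add: E_def eneg)
        hence "\<alpha> + \<beta> * chi ns (gneg ns g) a = \<alpha> + \<beta> * chi ns g a" using KF gG by simp
        hence "chi ns (gneg ns g) a = chi ns g a" using b0 by simp
        moreover have "chi ns (gneg ns g) a = cnj (chi ns g a)"
          using chi_sym[OF pos, of "gneg ns g" a] chi_gneg[OF pos, of a g] syma[of g] by simp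
        ultimately have "cnj (chi ns g a) = chi ns g a" by simp
        hence "chi ns g a * chi ns g a = 1" using chi_times_cnj[OF pos, of g a] by simp
        thus ?thesis using chi_gadd[OF pos, of g a a] chi_sym[OF pos, of "gadd ns a a" g] by simp
      qed
      have "(\<Sum>g\<in>grp ns. chi ns (gadd ns a a) g) = of_nat n" by (simp add: one n_def)
      thus ?thesis using orth[OF pos, of "gadd ns a a"] n0 by (auto simp: n_def split: if_splits)
    qed
    have pm: "chi ns a g = 1 \<or> chi ns a g = -1" for g by (rule L_pm[OF pos SG Sneg S0 aa])
    have KF': "\<forall>g\<in>grp ns. exp (\<i> * of_real t * eigval ns S g) = \<alpha> + \<beta> * chi ns a g"
      using KF syma by (simp add: E_def)
    have int: "integral_cayley ns S"
      by (rule integral_part[OF pos SG Sneg S0 aG a0 aa b0 KF'])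
    show "has_order_two ns (gsub ns x y)
     \<and> integral_cayley ns S
     \<and> (\<forall>g\<in>grp ns. chi ns (gsub ns x y) g = 1 \<longrightarrow> exp (\<i> * of_real t * eigval ns S g) = \<alpha> + \<beta>)
     \<and> (\<forall>g\<in>grp ns. chi ns (gsub ns x y) g = -1 \<longrightarrow> exp (\<i> * of_real t * eigval ns S g) = \<alpha> - \<beta>)"
      using a0 aa int KF' by (auto simp: has_order_two_def a_def[symmetric])
  next
    assume R: "has_order_two ns (gsub ns x y)
     \<and> integral_cayley ns S
     \<and> (\<forall>g\<in>grp ns. chi ns (gsub ns x y) g = 1 \<longrightarrow> exp (\<i> * of_real t * eigval ns S g) = \<alpha> + \<beta>)
     \<and> (\<forall>g\<in>grp ns. chi ns (gsub ns x y) g = -1 \<longrightarrow> exp (\<i> * of_real t * eigval ns S g) = \<alpha> - \<beta>)"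
    hence aa: "gadd ns a a = gzero ns" and int: "integral_cayley ns S"
      and C0: "\<And>g. g \<in> grp ns \<Longrightarrow> chi ns a g = 1 \<Longrightarrow> E g = \<alpha> + \<beta>"
      and C1: "\<And>g. g \<in> grp ns \<Longrightarrow> chi ns a g = -1 \<Longrightarrow> E g = \<alpha> - \<beta>"
      by (auto simp: has_order_two_def a_def[symmetric] E_def)
    have pm: "chi ns a g = 1 \<or> chi ns a g = -1" for g by (rule L_pm[OF pos SG Sneg S0 aa])
    have KF: "E g = \<alpha> + \<beta> * chi ns g a" if "g \<in> grp ns" for g
      using pm[of g] C0[OF that] C1[OF that] syma[of g] by auto
    have trans: "transH ns S t u x = (if u = x then \<alpha> else 0) + (if u = y then \<beta> else 0)"
      if uG: "u \<in> grp ns" for u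
    proof -
      have pt: "E g * chi ns g u * cnj (chi ns g x)
          = \<alpha> * (chi ns g u * cnj (chi ns g x)) + \<beta> * (chi ns g u * cnj (chi ns g y))"
        if "g \<in> grp ns" for g
      proof -
        have "chi ns g a * cnj (chi ns g x) = cnj (chi ns g y) * (chi ns g x * cnj (chi ns g x))"
          by (simp add: chia mult_ac)
        hence "chi ns g a * cnj (chi ns g x) = cnj (chi ns g y)" by simp
        thus ?thesis using KF[OF that] by (simp add: algebra_simps)
      qed
      have "transH ns S t u x = (\<Sum>g\<in>grp ns. \<alpha> * (chi ns g u * cnj (chi ns g x)) + \<beta> * (chi ns g u * cnj (chi ns g y))) / of_nat n"
        using F3x[OF uG] pt by simp
      also have "\<dots> = (\<alpha> * (if u = x then of_nat n else 0) + \<beta> * (if u = y then of_nat n else 0)) / of_nat n"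
        by (simp add: sum.distrib sum_distrib_left[symmetric] orth1[OF pos uG xG] orth1[OF pos uG yG] n_def)
      also have "\<dots> = (if u = x then \<alpha> else 0) + (if u = y then \<beta> else 0)"
        using n0 by (simp add: add_divide_distrib)
      finally show ?thesis .
    qed
    obtain g1 where g1: "g1 \<in> grp ns" "chi ns a g1 = -1"
      using L_g1[OF pos SG Sneg S0 aG a0] pm by blast
    have normE: "cmod (E g) = 1" if gG: "g \<in> grp ns" for g
    proof -
      obtain k where k: "eigval ns S g = of_int k" using int gG by (auto simp: integral_cayley_def elim: Ints_cases)
      have "E g = exp (\<i> * complex_of_real (t * of_int k))" by (simp add: E_def k mult.assoc)
      thus ?thesis by (simp only: norm_exp_i_times)
    qed
    have "cmod (\<alpha> + \<beta>) = 1" using normE[of "gzero ns"] C0[of "gzero ns"] by simp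
    moreover have "cmod (\<alpha> - \<beta>) = 1" using normE[OF g1(1)] C1[OF g1] by simp
    ultimately have "(cmod \<alpha>)\<^sup>2 + (cmod \<beta>)\<^sup>2 = 1" by (rule parallelogram)
    thus "frac_revival ns S \<alpha> \<beta> x y t" unfolding frac_revival_def using trans b0 by blast
  qed
qed

end
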